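(* Let $A \in \mathbb{R}^{n \times r}$, $B \in \mathbb{R}^{r \times n}$, $s=\mathrm{rank}(A)$, and for $\kappa\in\mathbb{R}^r_+$ let $f_\kappa\colon\mathbb{R}^n_+\to\mathbb{R}^n$, $f_\kappa(x)=A_\kappa x^B$. The following are equivalent: (inj) $f_\kappa$ is injective with respect to $\mathrm{im}(A)$, for all $\kappa \in \mathbb{R}^r_+$; (min) for all $I\subseteq [n]$, $J\subseteq [r]$ of cardinality $s$, the product $\det(A_{I,J}) \det(B_{J,I})$ either is zero or has the same sign as all other nonzero such products, and at least one such product is nonzero.
   Context: $\mathbb{R}_+$ denotes the strictly positive reals. $(x^B)_j=\prod_i x_i^{b_{ji}}$ (real exponents), $A_\kappa=A\,\mathrm{diag}(\kappa)$, $[n]=\{1,\dots,n\}$, $M_{K,L}$ is the submatrix with rows in $K$ and columns in $L$. A function $g$ on $\mathbb{R}^n_+$ is injective with respect to $S$ if $x,y\in\mathbb{R}^n_+$, $x\ne y$, $x-y\in S$ imply $g(x)\neq g(y)$. *)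

theory Defs
  imports Complex_Main "Jordan_Normal_Form.DL_Rank_Submatrix"
begin

definition pos_vecs :: "nat \<Rightarrow> real vec set" where
  "pos_vecs n = {x \<in> carrier_vec n. \<forall>i<n. x $ i > 0}"

definition mon_vec :: "real mat \<Rightarrow> real vec \<Rightarrow> real vec" where
  "mon_vec B x = vec (dim_row B) (\<lambda>j. \<Prod>i<dim_col B. (x $ i) powr (B $$ (j, i)))"

definition A_kappa :: "real mat \<Rightarrow> real vec \<Rightarrow> real mat" where
  "A_kappa A \<kappa> = A * mat_diag (dim_col A) (\<lambda>j. \<kappa> $ j)"

definition f_kappa :: "real mat \<Rightarrow> real mat \<Rightarrow> real vec \<Rightarrow> real vec \<Rightarrow> real vec" where
  "f_kappa A B \<kappa> x = A_kappa A \<kappa> *\<^sub>v mon_vec B x"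

definition mat_image :: "real mat \<Rightarrow> real vec set" where
  "mat_image A = {A *\<^sub>v v | v. v \<in> carrier_vec (dim_col A)}"

definition injective_wrt :: "nat \<Rightarrow> (real vec \<Rightarrow> real vec) \<Rightarrow> real vec set \<Rightarrow> bool" where
  "injective_wrt n g S \<longleftrightarrow>
     (\<forall>x \<in> pos_vecs n. \<forall>y \<in> pos_vecs n. x \<noteq> y \<and> x - y \<in> S \<longrightarrow> g x \<noteq> g y)"

end

theory Submission
  imports Defs
begin


lemma pick_bij:
  assumes "finite J"
  shows "bij_betw (pick J) {0..<card J} J"
proof -
  have inj: "inj_on (pick J) {0..<card J}"
    unfolding inj_on_def by (metis atLeastLessThan_iff nat_neq_iff pick_mono)
  have sub: "pick J ` {0..<card J} \<subseteq> J" using pick_in_set by auto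
  have "card (pick J ` {0..<card J}) = card J" using card_image[OF inj] by simp
  hence "pick J ` {0..<card J} = J" using sub assms by (metis card_subset_eq)
  with inj show ?thesis unfolding bij_betw_def by auto
qed

lemma card_less_in:
  fixes J :: "nat set"
  assumes "finite J" "x \<in> J"
  shows "card {a\<in>J. a < x} < card J"
proof (rule psubset_card_mono)
  have "x \<notin> {a\<in>J. a < x}" by simp
  then show "{a\<in>J. a < x} \<subset> J" using assms(2) by blast
qed (use assms in auto)

lemma card_J_lt: "J \<subseteq> {0..<m} \<Longrightarrow> {i. i < m \<and> i \<in> J} = J" by auto

lemma submatrix_UNIV_J_carrier:
  assumes X: "X \<in> carrier_mat k m" and J: "J \<subseteq> {0..<m}" "card J = k"
  shows "submatrix X UNIV J \<in> carrier_mat k k"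
proof -
  have "{j. j < m \<and> j \<in> J} = J" using J by auto
  then show ?thesis using X J unfolding carrier_mat_def by (simp add: dim_submatrix)
qed

lemma submatrix_J_UNIV_carrier:
  assumes Y: "Y \<in> carrier_mat m k" and J: "J \<subseteq> {0..<m}" "card J = k"
  shows "submatrix Y J UNIV \<in> carrier_mat k k"
proof -
  have "{j. j < m \<and> j \<in> J} = J" using J by auto
  then show ?thesis using Y J unfolding carrier_mat_def by (simp add: dim_submatrix)
qed

lemma cauchy_binet:
  fixes X Y :: "'a::comm_ring_1 mat"
  assumes X: "X \<in> carrier_mat k m" and Y: "Y \<in> carrier_mat m k"
  shows "det (X * Y) = (\<Sum>J \<in> {J. J \<subseteq> {0..<m} \<and> card J = k}.
            det (submatrix X UNIV J) * det (submatrix Y J UNIV))"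
proof -
  let ?U = "{0..<k}"
  let ?F = "{f. (\<forall>i\<in>?U. f i \<in> {0..<m}) \<and> (\<forall>i. i \<notin> ?U \<longrightarrow> f i = i)}"
  let ?G = "{f. f \<in> ?F \<and> inj_on f ?U}"
  let ?SJ = "{J. J \<subseteq> {0..<m} \<and> card J = k}"
  let ?P = "{p. p permutes ?U}"
  let ?g = "\<lambda>f. det (mat\<^sub>r k k (\<lambda>i. X $$ (i, f i) \<cdot>\<^sub>v row Y (f i)))"
  let ?h = "\<lambda>f. (\<Prod>i\<in>?U. X $$ (i, f i)) * det (mat\<^sub>r k k (\<lambda>i. row Y (f i)))"
  have finF: "finite ?F" by (rule finite_bounded_functions, auto)
  have 1: "det (X * Y) = sum ?g ?F"
    unfolding mat_mul_finsum_alt[OF X Y]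
    by (rule det_linear_rows_sum, insert Y, auto)
  also have "\<dots> = sum ?h ?F"
  proof (rule sum.cong[OF refl])
    fix f assume "f \<in> ?F"
    show "?g f = ?h f"
      by (rule det_rows_mul, insert Y, auto)
  qed
  also have "\<dots> = sum ?h ?G"
  proof (rule sum.mono_neutral_right[OF finF])
    show "?G \<subseteq> ?F" by force
    show "\<forall>f\<in>?F - ?G. ?h f = 0"
    proof
    fix f assume "f \<in> ?F - ?G"
    then have f: "f \<in> ?F" and ni: "f \<notin> ?G" by auto
    then obtain i j where ij: "f i = f j" "i \<noteq> j" "i < k" "j < k"
      unfolding inj_on_def by auto
    have "det (mat\<^sub>r k k (\<lambda>i. row Y (f i))) = 0"
      by (rule det_identical_rows[OF _ ij(2-4)], insert Y ij, auto)
    then show "?h f = 0" by simp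
  qed
  qed
  also have "\<dots> = sum (\<lambda>(J,p). ?h (\<lambda>i. if i < k then pick J (p i) else i)) (SIGMA J:?SJ. ?P)"
  proof (rule sum.reindex_bij_witness[where i = "\<lambda>(J,p). (\<lambda>i. if i < k then pick J (p i) else i)"
        and j = "\<lambda>f. (f ` ?U, \<lambda>i. if i < k then card {a \<in> f ` ?U. a < f i} else i)"])
    fix Jp assume "Jp \<in> (SIGMA J:?SJ. ?P)"
    then obtain J p where Jp: "Jp = (J,p)" and J: "J \<subseteq> {0..<m}" "card J = k" and p: "p permutes ?U"
      by auto
    have finJ: "finite J" using J finite_subset by blast
    have pU: "\<And>i. i < k \<Longrightarrow> p i < k" using p permutes_in_image by fastforce
    have pout: "\<And>i. \<not> i < k \<Longrightarrow> p i = i" using p unfolding permutes_def by auto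
    let ?f = "\<lambda>i. if i < k then pick J (p i) else i"
    have img: "?f ` ?U = J"
    proof -
      have "?f ` ?U = pick J ` (p ` ?U)" by (auto simp: image_image)
      also have "p ` ?U = ?U" using permutes_image[OF p] .
      also have "pick J ` ?U = J" using pick_bij[OF finJ] J(2) by (simp add: bij_betw_def)
      finally show ?thesis .
    qed
    have peq: "(\<lambda>i. if i < k then card {a \<in> J. a < ?f i} else i) = p"
    proof
      fix i show "(if i < k then card {a \<in> J. a < ?f i} else i) = p i"
        using pU[of i] pout[of i] card_pick[of "p i" J] J(2) by auto
    qed
    show "(\<lambda>f. (f ` ?U, \<lambda>i. if i < k then card {a \<in> f ` ?U. a < f i} else i)) ((\<lambda>(J,p). \<lambda>i. if i < k then pick J (p i) else i) Jp) = Jp"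
      unfolding Jp prod.case img peq ..
    have "inj_on ?f ?U"
    proof (rule inj_onI)
      fix i j assume "i \<in> ?U" "j \<in> ?U" "?f i = ?f j"
      then have "pick J (p i) = pick J (p j)" "p i < card J" "p j < card J" using pU J(2) by auto
      then have "p i = p j" using pick_mono by (metis nat_neq_iff)
      then show "i = j" using permutes_inj[OF p] by (auto dest: injD)
    qed
    moreover have "\<forall>i\<in>?U. ?f i \<in> {0..<m}"
    proof
      fix i assume "i \<in> ?U"
      then have "pick J (p i) \<in> J" using pick_in_set[of "p i" J] pU J by auto
      then show "?f i \<in> {0..<m}" using J \<open>i \<in> ?U\<close> by auto
    qed
    ultimately show "(\<lambda>(J,p). \<lambda>i. if i < k then pick J (p i) else i) Jp \<in> ?G" unfolding Jp by auto
  next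
    fix f assume f: "f \<in> ?G"
    let ?J = "f ` ?U"
    let ?p = "\<lambda>i. if i < k then card {a \<in> ?J. a < f i} else i"
    have inj: "inj_on f ?U" and fU: "\<forall>i\<in>?U. f i \<in> {0..<m}" and fout: "\<forall>i. i \<notin> ?U \<longrightarrow> f i = i"
      using f by auto
    have cJ: "card ?J = k" using card_image[OF inj] by simp
    have finJ: "finite ?J" by simp
    have pick_eq: "\<And>i. i < k \<Longrightarrow> pick ?J (?p i) = f i"
      using pick_card_in_set by auto
    have pU: "\<And>i. i < k \<Longrightarrow> ?p i < k"
      using card_less_in[OF finJ] cJ by auto
    have pperm: "?p permutes ?U"
    proof (rule inj_on_nat_permutes)
      show "inj_on ?p ?U"
      proof (rule inj_onI)
        fix i j assume ij: "i \<in> ?U" "j \<in> ?U" "?p i = ?p j"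
        then have "f i = f j" using pick_eq[of i] pick_eq[of j] by auto
        then show "i = j" using inj ij unfolding inj_on_def by auto
      qed
    qed (insert pU, auto)
    show "(\<lambda>f. (f ` ?U, ?p)) f \<in> (SIGMA J:?SJ. ?P)"
      using fU cJ pperm by auto
    show "(\<lambda>(J,p). \<lambda>i. if i < k then pick J (p i) else i) ((\<lambda>f. (f ` ?U, \<lambda>i. if i < k then card {a \<in> f ` ?U. a < f i} else i)) f) = f"
    proof
      fix i show "(\<lambda>(J,p). \<lambda>i. if i < k then pick J (p i) else i) ((\<lambda>f. (f ` ?U, \<lambda>i. if i < k then card {a \<in> f ` ?U. a < f i} else i)) f) i = f i"
        using pick_eq[of i] fout by auto
    qed
  next
    fix f assume f: "f \<in> ?G"
    let ?J = "f ` ?U"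
    let ?p = "\<lambda>i. if i < k then card {a \<in> ?J. a < f i} else i"
    have fout: "\<forall>i. i \<notin> ?U \<longrightarrow> f i = i"
      using f by auto
    have pick_eq: "\<And>i. i < k \<Longrightarrow> pick ?J (?p i) = f i"
      using pick_card_in_set by auto
    have eq: "(\<lambda>i. if i < k then pick ?J (?p i) else i) = f"
    proof
      fix i show "(if i < k then pick ?J (?p i) else i) = f i"
        using pick_eq[of i] fout by auto
    qed
    show "(\<lambda>(J,p). ?h (\<lambda>i. if i < k then pick J (p i) else i)) ((\<lambda>f. (f ` ?U, \<lambda>i. if i < k then card {a \<in> f ` ?U. a < f i} else i)) f) = ?h f"
      using arg_cong[where f = "?h", OF eq] by (simp only: prod.case)
  qed
  also have "\<dots> = (\<Sum>J\<in>?SJ. \<Sum>p\<in>?P. ?h (\<lambda>i. if i < k then pick J (p i) else i))"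
    by (rule sum.Sigma[symmetric], auto intro: finite_permutations)
  also have "\<dots> = (\<Sum>J\<in>?SJ. det (submatrix X UNIV J) * det (submatrix Y J UNIV))"
  proof (rule sum.cong[OF refl])
    fix J assume "J \<in> ?SJ"
    then have J: "J \<subseteq> {0..<m}" "card J = k" by auto
    have cJ: "{i. i < m \<and> i \<in> J} = J" using J by auto
    have XJ: "submatrix X UNIV J \<in> carrier_mat k k" by (rule submatrix_UNIV_J_carrier[OF X J])
    have YJ: "submatrix Y J UNIV \<in> carrier_mat k k" by (rule submatrix_J_UNIV_carrier[OF Y J])
    {
      fix p assume p: "p permutes ?U"
      have pU: "\<And>i. i < k \<Longrightarrow> p i < k" using p permutes_in_image by fastforce
      have "mat\<^sub>r k k (\<lambda>i. row Y ((\<lambda>i. if i < k then pick J (p i) else i) i))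
          = mat k k (\<lambda>(i,j). submatrix Y J UNIV $$ (p i, j))"
      proof (rule eq_matI)
        fix i j assume ij: "i < dim_row (mat k k (\<lambda>(i,j). submatrix Y J UNIV $$ (p i, j)))"
          "j < dim_col (mat k k (\<lambda>(i,j). submatrix Y J UNIV $$ (p i, j)))"
        then have ij': "i < k" "j < k" by auto
        have pik: "pick J (p i) < m" using pick_in_set[of "p i" J] pU[OF ij'(1)] J by auto
        show "mat\<^sub>r k k (\<lambda>i. row Y ((\<lambda>i. if i < k then pick J (p i) else i) i)) $$ (i,j)
            = mat k k (\<lambda>(i,j). submatrix Y J UNIV $$ (p i, j)) $$ (i,j)"
          using ij' pU[OF ij'(1)] Y pik
          by (auto simp: submatrix_index cJ J pick_UNIV)
      qed auto
      then have "?h (\<lambda>i. if i < k then pick J (p i) else i)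
          = (\<Prod>i\<in>?U. X $$ (i, pick J (p i))) * (signof p * det (submatrix Y J UNIV))"
        using det_permute_rows[OF YJ p] by (auto intro!: arg_cong2[where f = "(*)"] prod.cong)
      also have "(\<Prod>i\<in>?U. X $$ (i, pick J (p i))) = (\<Prod>i\<in>?U. submatrix X UNIV J $$ (i, p i))"
      proof (rule prod.cong[OF refl])
        fix i assume "i \<in> ?U"
        then show "X $$ (i, pick J (p i)) = submatrix X UNIV J $$ (i, p i)"
          using pU[of i] X by (auto simp: submatrix_index cJ J pick_UNIV)
      qed
      finally have "?h (\<lambda>i. if i < k then pick J (p i) else i)
          = (signof p * (\<Prod>i\<in>?U. submatrix X UNIV J $$ (i, p i))) * det (submatrix Y J UNIV)"
        by (simp add: ac_simps)
    } note * = this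
    have "(\<Sum>p\<in>?P. ?h (\<lambda>i. if i < k then pick J (p i) else i))
        = (\<Sum>p\<in>?P. (signof p * (\<Prod>i\<in>?U. submatrix X UNIV J $$ (i, p i))) * det (submatrix Y J UNIV))"
      by (rule sum.cong[OF refl], insert *, auto)
    also have "\<dots> = det (submatrix X UNIV J) * det (submatrix Y J UNIV)"
      unfolding det_def'[OF XJ] sum_distrib_right by simp
    finally show "(\<Sum>p\<in>?P. ?h (\<lambda>i. if i < k then pick J (p i) else i)) = det (submatrix X UNIV J) * det (submatrix Y J UNIV)" .
  qed
  finally show ?thesis .
qed


lemma (in vec_space) rank_decomp:
  assumes A: "A \<in> carrier_mat n nc"
  shows "\<exists>P Q E. P \<in> carrier_mat n (rank A) \<and> Q \<in> carrier_mat (rank A) nc \<and> A = P * Q \<and>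
     (\<forall>w \<in> carrier_vec (rank A). P *\<^sub>v w = 0\<^sub>v n \<longrightarrow> w = 0\<^sub>v (rank A)) \<and>
     E \<in> carrier_mat nc (rank A) \<and> P = A * E"
proof -
  have colsC: "set (cols A) \<subseteq> carrier_vec n" using A cols_dim by blast
  have li0: "lin_indpt {}" unfolding lin_dep_def by auto
  obtain S where finS: "finite S" and max: "maximal S (\<lambda>T. T \<subseteq> set (cols A) \<and> lin_indpt T)"
    using maximal_exists_superset[of "set (cols A)" "(\<lambda>T. T \<subseteq> set (cols A) \<and> lin_indpt T)" "{}"] li0
    by auto
  have SA: "S \<subseteq> set (cols A)" and liS: "lin_indpt S" using max unfolding maximal_def by auto
  have SC: "S \<subseteq> carrier_vec n" using SA colsC by auto
  have rk: "rank A = card S" by (rule rank_card_indpt[OF A max])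
  obtain L where L: "set L = S" "distinct L" using finite_distinct_list[OF finS] by auto
  have lenL: "length L = rank A" using rk L distinct_card by metis
  define P where "P = mat_of_cols n L"
  have P: "P \<in> carrier_mat n (rank A)" unfolding P_def using lenL by auto
  have colsP: "cols P = L" unfolding P_def using L SC by (intro cols_mat_of_cols) auto
  have inspan: "\<And>c. c \<in> set (cols A) \<Longrightarrow> \<exists>w \<in> carrier_vec (rank A). c = P *\<^sub>v w"
  proof -
    fix c assume c: "c \<in> set (cols A)"
    have cC: "c \<in> carrier_vec n" using c colsC by auto
    have "c \<in> span S"
    proof (cases "c \<in> S")
      case True then show ?thesis using span_mem[OF SC] by auto
    next
      case False
      show ?thesis
      proof (rule ccontr)
        assume "c \<notin> span S"
        then have "lin_indpt (S \<union> {c})" using lin_dep_iff_in_span[OF SC liS cC False] by auto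
        moreover have "S \<union> {c} \<subseteq> set (cols A)" using SA c by auto
        ultimately have "S \<union> {c} = S" using max unfolding maximal_def by blast
        then show False using False by auto
      qed
    qed
    then have "c \<in> span_list L" using span_list_as_span[of L] L SC by auto
    then obtain cf where "c = lincomb_list cf L" by (auto elim: in_span_listE)
    also have "\<dots> = P *\<^sub>v vec (length L) cf" unfolding P_def
      by (rule lincomb_list_as_mat_mult, insert SC L, auto)
    finally show "\<exists>w \<in> carrier_vec (rank A). c = P *\<^sub>v w" using lenL by auto
  qed
  have "\<forall>j < nc. \<exists>w \<in> carrier_vec (rank A). col A j = P *\<^sub>v w"
    using inspan A by (auto simp: cols_def)
  then obtain W where W: "\<And>j. j < nc \<Longrightarrow> W j \<in> carrier_vec (rank A) \<and> col A j = P *\<^sub>v W j"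
    by metis
  define Q where "Q = mat_of_cols (rank A) (map W [0..<nc])"
  have Q: "Q \<in> carrier_mat (rank A) nc" unfolding Q_def by auto
  have APQ: "A = P * Q"
  proof (rule eq_matI)
    fix i j assume ij: "i < dim_row (P * Q)" "j < dim_col (P * Q)"
    then have ij': "i < n" "j < nc" using P Q by auto
    have "col Q j = W j" unfolding Q_def using W[OF ij'(2)] ij'(2)
      by (subst col_mat_of_cols) auto
    then have "(P * Q) $$ (i,j) = (P *\<^sub>v W j) $ i" using ij' P Q by (auto simp: mult_mat_vec_def)
    also have "\<dots> = col A j $ i" using W[OF ij'(2)] by simp
    also have "\<dots> = A $$ (i,j)" using ij' A by auto
    finally show "A $$ (i,j) = (P * Q) $$ (i,j)" by simp
  qed (insert A P Q, auto)
  have inj: "\<forall>w \<in> carrier_vec (rank A). P *\<^sub>v w = 0\<^sub>v n \<longrightarrow> w = 0\<^sub>v (rank A)"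
  proof (intro ballI impI, rule ccontr)
    fix w assume w: "w \<in> carrier_vec (rank A)" "P *\<^sub>v w = 0\<^sub>v n" "w \<noteq> 0\<^sub>v (rank A)"
    have "lin_dep (set (cols P))"
      by (rule lin_depI[OF P w(1) w(3) w(2)], insert colsP L, auto)
    then show False using colsP L liS by auto
  qed
  have "\<forall>k < rank A. \<exists>j < nc. L ! k = col A j"
  proof (intro allI impI)
    fix k assume "k < rank A"
    then have "L ! k \<in> set (cols A)" using lenL L SA by (metis nth_mem subsetD)
    then show "\<exists>j < nc. L ! k = col A j" using A by (auto simp: cols_def)
  qed
  then obtain idx where idx: "\<And>k. k < rank A \<Longrightarrow> idx k < nc \<and> L ! k = col A (idx k)" by metis
  define E where "E = (mat nc (rank A) (\<lambda>(j,k). if j = idx k then 1 else 0) :: 'a mat)"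
  have E: "E \<in> carrier_mat nc (rank A)" unfolding E_def by auto
  have PAE: "P = A * E"
  proof (rule eq_matI)
    fix i k assume ik: "i < dim_row (A * E)" "k < dim_col (A * E)"
    then have ik': "i < n" "k < rank A" using A E by auto
    have "(A * E) $$ (i,k) = (\<Sum>j<nc. A $$ (i,j) * (if j = idx k then 1 else 0))"
      using ik' A unfolding E_def by (auto simp: scalar_prod_def lessThan_atLeast0 intro!: sum.cong)
    also have "\<dots> = A $$ (i, idx k)" using idx[OF ik'(2)]
      by (simp add: if_distrib[where f = "\<lambda>a. _ * a"] sum.delta cong: if_cong)
    also have "\<dots> = L ! k $ i" using idx[OF ik'(2)] ik' A by auto
    also have "\<dots> = P $$ (i,k)" unfolding P_def using ik' lenL by (simp add: mat_of_cols_index)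
    finally show "P $$ (i,k) = (A * E) $$ (i,k)" by simp
  qed (insert A P E, auto)
  show ?thesis using P Q APQ inj E PAE by blast
qed


definition Cm :: "real mat \<Rightarrow> (nat \<Rightarrow> real) \<Rightarrow> (nat \<Rightarrow> real) \<Rightarrow> real mat" where
  "Cm B k l = mat (dim_row B) (dim_col B) (\<lambda>(j,i). k j * B $$ (j,i) * l i)"

definition noker :: "real mat \<Rightarrow> real mat \<Rightarrow> (nat \<Rightarrow> real) \<Rightarrow> (nat \<Rightarrow> real) \<Rightarrow> bool" where
  "noker A B k l \<longleftrightarrow> \<not> (\<exists>v. v \<in> mat_image A \<and> v \<noteq> 0\<^sub>v (dim_row A) \<and> A *\<^sub>v (Cm B k l *\<^sub>v v) = 0\<^sub>v (dim_row A))"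

lemma f_kappa_alt:
  assumes A: "A \<in> carrier_mat n r" and B: "B \<in> carrier_mat r n"
  shows "f_kappa A B \<kappa> x = A *\<^sub>v vec r (\<lambda>j. \<kappa> $ j * (\<Prod>i<n. (x $ i) powr B $$ (j,i)))"
proof -
  have m: "mon_vec B x \<in> carrier_vec r" using B unfolding mon_vec_def by auto
  have d: "mat_diag r (\<lambda>j. \<kappa> $ j) *\<^sub>v mon_vec B x = vec r (\<lambda>j. \<kappa> $ j * (\<Prod>i<n. (x $ i) powr B $$ (j,i)))"
  proof (rule eq_vecI)
    fix j assume "j < dim_vec (vec r (\<lambda>j. \<kappa> $ j * (\<Prod>i<n. (x $ i) powr B $$ (j,i))))"
    then have j: "j < r" by simp
    have "(mat_diag r (\<lambda>j. \<kappa> $ j) *\<^sub>v mon_vec B x) $ j = (\<Sum>k<r. (if j = k then \<kappa> $ k else 0) * mon_vec B x $ k)"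
      using j m unfolding mat_diag_def by (auto simp: scalar_prod_def lessThan_atLeast0 intro!: sum.cong)
    also have "\<dots> = \<kappa> $ j * mon_vec B x $ j"
      by (simp add: if_distrib[where f = "\<lambda>a. a * _"] sum.delta j cong: if_cong)
    finally show "(mat_diag r (\<lambda>j. \<kappa> $ j) *\<^sub>v mon_vec B x) $ j = vec r (\<lambda>j. \<kappa> $ j * (\<Prod>i<n. (x $ i) powr B $$ (j,i))) $ j"
      using j B unfolding mon_vec_def by simp
  qed (auto simp: mat_diag_def)
  show ?thesis unfolding f_kappa_def A_kappa_def
    using assoc_mult_mat_vec[OF A mat_diag_dim m] d A by simp
qed

lemma exp_diff_pos: "\<exists>\<mu>>0. exp a - exp b = \<mu> * (a - b)" for a b :: real
proof (cases "a = b")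
  case True then show ?thesis by (intro exI[of _ 1]) auto
next
  case False
  have "(exp a - exp b) / (a - b) > 0"
  proof (cases "a < b")
    case True then show ?thesis by (simp add: divide_neg_neg)
  next
    case False2: False
    then have "b < a" using False by auto
    then show ?thesis by simp
  qed
  then show ?thesis using False by (intro exI[of _ "(exp a - exp b) / (a - b)"]) auto
qed

lemma mon_exp:
  assumes "x \<in> pos_vecs n"
  shows "(\<Prod>i<n. (x $ i) powr B $$ (j,i)) = exp (\<Sum>i<n. B $$ (j,i) * ln (x $ i))"
  using assms unfolding pos_vecs_def
  by (auto simp: exp_sum powr_def intro!: prod.cong)

definition eq_q :: "real \<Rightarrow> real \<Rightarrow> real" where
  "eq_q a b = (if a = b then 1 else (exp a - exp b) / (a - b))"

lemma eq_q: "eq_q a b > 0" "exp a - exp b = eq_q a b * (a - b)"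
proof -
  show "eq_q a b > 0"
  proof (cases "a = b")
    case False
    show ?thesis
    proof (cases "a < b")
      case True then show ?thesis unfolding eq_q_def by (simp add: divide_neg_neg)
    next
      case False2: False
      then have "b < a" using False by auto
      then show ?thesis unfolding eq_q_def by simp
    qed
  qed (simp add: eq_q_def)
  show "exp a - exp b = eq_q a b * (a - b)" unfolding eq_q_def by auto
qed

definition ln_q :: "real \<Rightarrow> real \<Rightarrow> real" where
  "ln_q a b = (if a = b then 1 else (ln a - ln b) / (a - b))"

lemma ln_q: assumes "a > 0" "b > 0" shows "ln_q a b > 0" "ln a - ln b = ln_q a b * (a - b)"
proof -
  show "ln_q a b > 0"
  proof (cases "a = b")
    case False
    show ?thesis
    proof (cases "a < b")
      case True then have "ln a < ln b" using assms by simp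
      then show ?thesis using True unfolding ln_q_def by (simp add: divide_neg_neg)
    next
      case False2: False
      then have "b < a" using False by auto
      then have "ln b < ln a" using assms by simp
      then show ?thesis using \<open>b < a\<close> unfolding ln_q_def by simp
    qed
  qed (simp add: ln_q_def)
  show "ln a - ln b = ln_q a b * (a - b)" unfolding ln_q_def by auto
qed

lemma key_identity:
  assumes A: "A \<in> carrier_mat n r" and B: "B \<in> carrier_mat r n"
    and x: "x \<in> pos_vecs n" and y: "y \<in> pos_vecs n"
    and l: "\<And>i. i < n \<Longrightarrow> l i * (x $ i - y $ i) = ln (x $ i) - ln (y $ i)"
    and k: "\<And>j. j < r \<Longrightarrow> k j = \<kappa> $ j * eq_q (\<Sum>i<n. B $$ (j,i) * ln (x $ i)) (\<Sum>i<n. B $$ (j,i) * ln (y $ i))"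
  shows "A *\<^sub>v (Cm B k l *\<^sub>v (x - y)) = f_kappa A B \<kappa> x - f_kappa A B \<kappa> y"
proof -
  have xC: "x \<in> carrier_vec n" and yC: "y \<in> carrier_vec n" using x y unfolding pos_vecs_def by auto
  define Ex where "Ex j = (\<Sum>i<n. B $$ (j,i) * ln (x $ i))" for j
  define Ey where "Ey j = (\<Sum>i<n. B $$ (j,i) * ln (y $ i))" for j
  define ax where "ax = vec r (\<lambda>j. \<kappa> $ j * exp (Ex j))"
  define ay where "ay = vec r (\<lambda>j. \<kappa> $ j * exp (Ey j))"
  have fx: "f_kappa A B \<kappa> x = A *\<^sub>v ax"
    unfolding f_kappa_alt[OF A B] ax_def Ex_def using mon_exp[OF x] by simp
  have fy: "f_kappa A B \<kappa> y = A *\<^sub>v ay"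
    unfolding f_kappa_alt[OF A B] ay_def Ey_def using mon_exp[OF y] by simp
  have "Cm B k l *\<^sub>v (x - y) = ax - ay"
  proof (rule eq_vecI)
    fix j assume "j < dim_vec (ax - ay)"
    then have j: "j < r" unfolding ax_def ay_def by simp
    have "(Cm B k l *\<^sub>v (x - y)) $ j = (\<Sum>i<n. (k j * B $$ (j,i) * l i) * (x $ i - y $ i))"
      using j B xC yC unfolding Cm_def
      by (auto simp: scalar_prod_def lessThan_atLeast0 intro!: sum.cong)
    also have "\<dots> = k j * (\<Sum>i<n. B $$ (j,i) * (l i * (x $ i - y $ i)))"
      by (simp add: sum_distrib_left ac_simps)
    also have "\<dots> = k j * (Ex j - Ey j)"
    proof -
      have "(\<Sum>i<n. B $$ (j,i) * (l i * (x $ i - y $ i))) = (\<Sum>i<n. B $$ (j,i) * ln (x $ i) - B $$ (j,i) * ln (y $ i))"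
        by (rule sum.cong[OF refl], simp add: l right_diff_distrib[symmetric])
      then show ?thesis unfolding Ex_def Ey_def sum_subtractf by simp
    qed
    also have "\<dots> = \<kappa> $ j * (exp (Ex j) - exp (Ey j))"
      using k[OF j] eq_q(2)[of "Ex j" "Ey j"] unfolding Ex_def Ey_def by simp
    also have "\<dots> = (ax - ay) $ j" using j unfolding ax_def ay_def by (simp add: algebra_simps)
    finally show "(Cm B k l *\<^sub>v (x - y)) $ j = (ax - ay) $ j" .
  qed (insert B, auto simp: Cm_def ax_def ay_def)
  then show ?thesis unfolding fx fy
    using mult_minus_distrib_mat_vec[OF A, of ax ay] unfolding ax_def ay_def by simp
qed

lemma vec_diff_zero_iff:
  fixes a b :: "real vec"
  assumes "a \<in> carrier_vec n" "b \<in> carrier_vec n"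
  shows "a - b = 0\<^sub>v n \<longleftrightarrow> a = b"
  using assms by (auto simp: vec_eq_iff)

lemma pos_vecs_carrier: "x \<in> pos_vecs n \<Longrightarrow> x \<in> carrier_vec n"
  unfolding pos_vecs_def by auto

lemma mat_image_carrier: "A \<in> carrier_mat n r \<Longrightarrow> v \<in> mat_image A \<Longrightarrow> v \<in> carrier_vec n"
  unfolding mat_image_def by auto

lemma noker_imp_inj:
  assumes A: "A \<in> carrier_mat n r" and B: "B \<in> carrier_mat r n"
    and nk: "\<And>k l. (\<forall>j<r. k j > 0) \<Longrightarrow> (\<forall>i<n. l i > 0) \<Longrightarrow> noker A B k l"
    and \<kappa>: "\<kappa> \<in> pos_vecs r"
  shows "injective_wrt n (f_kappa A B \<kappa>) (mat_image A)"
  unfolding injective_wrt_def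
proof (intro ballI impI notI, elim conjE)
  fix x y assume x: "x \<in> pos_vecs n" and y: "y \<in> pos_vecs n" and xy: "x \<noteq> y"
    and im: "x - y \<in> mat_image A" and feq: "f_kappa A B \<kappa> x = f_kappa A B \<kappa> y"
  have xC: "x \<in> carrier_vec n" and yC: "y \<in> carrier_vec n" using x y by (auto intro: pos_vecs_carrier)
  define l where "l i = ln_q (x $ i) (y $ i)" for i
  define k where "k j = \<kappa> $ j * eq_q (\<Sum>i<n. B $$ (j,i) * ln (x $ i)) (\<Sum>i<n. B $$ (j,i) * ln (y $ i))" for j
  have lpos: "\<forall>i<n. l i > 0" using x y unfolding pos_vecs_def l_def by (auto intro: ln_q)
  have kpos: "\<forall>j<r. k j > 0" using \<kappa> eq_q(1) unfolding pos_vecs_def k_def by auto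
  have leq: "\<And>i. i < n \<Longrightarrow> l i * (x $ i - y $ i) = ln (x $ i) - ln (y $ i)"
    using x y unfolding pos_vecs_def l_def by (auto simp: ln_q(2))
  have key: "A *\<^sub>v (Cm B k l *\<^sub>v (x - y)) = f_kappa A B \<kappa> x - f_kappa A B \<kappa> y"
    by (rule key_identity[OF A B x y leq]) (simp_all add: k_def)
  have fC: "f_kappa A B \<kappa> y \<in> carrier_vec n" using f_kappa_alt[OF A B] A by simp
  have "A *\<^sub>v (Cm B k l *\<^sub>v (x - y)) = 0\<^sub>v n" unfolding key feq using fC by simp
  moreover have "x - y \<noteq> 0\<^sub>v n" using xy xC yC vec_diff_zero_iff by auto
  ultimately have "\<not> noker A B k l" unfolding noker_def using im A by auto
  then show False using nk[OF kpos lpos] by simp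
qed

lemma inj_imp_noker:
  assumes A: "A \<in> carrier_mat n r" and B: "B \<in> carrier_mat r n"
    and inj: "\<forall>\<kappa> \<in> pos_vecs r. injective_wrt n (f_kappa A B \<kappa>) (mat_image A)"
    and kpos: "\<forall>j<r. k j > 0" and lpos: "\<forall>i<n. l i > 0"
  shows "noker A B k l"
  unfolding noker_def
proof (rule notI, elim exE conjE)
  fix v assume im: "v \<in> mat_image A" and v0: "v \<noteq> 0\<^sub>v (dim_row A)"
    and ker: "A *\<^sub>v (Cm B k l *\<^sub>v v) = 0\<^sub>v (dim_row A)"
  have vC: "v \<in> carrier_vec n" using mat_image_carrier[OF A im] .
  define y where "y = vec n (\<lambda>i. if v $ i = 0 then 1 else v $ i / (exp (l i * v $ i) - 1))"
  define x where "x = vec n (\<lambda>i. y $ i * exp (l i * v $ i))"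
  have ypos: "\<And>i. i < n \<Longrightarrow> y $ i > 0"
  proof -
    fix i assume i: "i < n"
    show "y $ i > 0"
    proof (cases "v $ i > 0")
      case True
      then have "exp (l i * v $ i) > 1" using lpos i by simp
      then show ?thesis using True i unfolding y_def by simp
    next
      case False
      show ?thesis
      proof (cases "v $ i = 0")
        case True then show ?thesis using i unfolding y_def by simp
      next
        case False2: False
        then have vn: "v $ i < 0" using False by simp
        then have "l i * v $ i < 0" using lpos i by (simp add: mult_pos_neg)
        then have "exp (l i * v $ i) < 1" by simp
        then show ?thesis using vn i unfolding y_def by (simp add: divide_neg_neg)
      qed
    qed
  qed
  have x_pos: "x \<in> pos_vecs n" unfolding pos_vecs_def x_def using ypos by auto
  have y_pos: "y \<in> pos_vecs n" unfolding pos_vecs_def y_def using ypos[unfolded y_def] by auto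
  have xy: "x - y = v"
  proof (rule eq_vecI)
    fix i assume "i < dim_vec v"
    then have i: "i < n" using vC by simp
    show "(x - y) $ i = v $ i"
    proof (cases "v $ i = 0")
      case True then show ?thesis using i unfolding x_def y_def by simp
    next
      case False
      moreover have "l i > 0" using lpos i by simp
      ultimately have "l i * v $ i \<noteq> 0" by simp
      then have e1: "exp (l i * v $ i) - 1 \<noteq> 0" by simp
      have "(x - y) $ i = v $ i / (exp (l i * v $ i) - 1) * exp (l i * v $ i) - v $ i / (exp (l i * v $ i) - 1)"
        using i False vC unfolding x_def y_def by simp
      also have "\<dots> = v $ i / (exp (l i * v $ i) - 1) * (exp (l i * v $ i) - 1)"
        by (simp add: right_diff_distrib)
      also have "\<dots> = v $ i" using e1 by simp
      finally show ?thesis .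
    qed
  qed (insert vC, auto simp: x_def y_def)
  have leq: "\<And>i. i < n \<Longrightarrow> l i * (x $ i - y $ i) = ln (x $ i) - ln (y $ i)"
  proof -
    fix i assume i: "i < n"
    have "x $ i = y $ i * exp (l i * v $ i)" using i unfolding x_def by simp
    then have "ln (x $ i) = ln (y $ i) + l i * v $ i" using ypos[OF i] by (simp add: ln_mult)
    moreover have "x $ i - y $ i = v $ i" proof -
      have "(x - y) $ i = x $ i - y $ i" using i by (simp add: x_def y_def)
      then show ?thesis using xy by simp
    qed
    ultimately show "l i * (x $ i - y $ i) = ln (x $ i) - ln (y $ i)" by simp
  qed
  define q where "q j = eq_q (\<Sum>i<n. B $$ (j,i) * ln (x $ i)) (\<Sum>i<n. B $$ (j,i) * ln (y $ i))" for j
  define \<kappa> where "\<kappa> = vec r (\<lambda>j. k j / q j)"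
  have qpos: "\<And>j. q j > 0" unfolding q_def by (rule eq_q(1))
  have \<kappa>pos: "\<kappa> \<in> pos_vecs r" unfolding pos_vecs_def \<kappa>_def using kpos qpos by auto
  have keq: "\<And>j. j < r \<Longrightarrow> k j = \<kappa> $ j * q j"
  proof -
    fix j assume "j < r"
    moreover have "q j \<noteq> 0" using qpos[of j] by simp
    ultimately show "k j = \<kappa> $ j * q j" unfolding \<kappa>_def by simp
  qed
  have key: "A *\<^sub>v (Cm B k l *\<^sub>v (x - y)) = f_kappa A B \<kappa> x - f_kappa A B \<kappa> y"
    by (rule key_identity[OF A B x_pos y_pos leq]) (simp_all add: keq q_def)
  have fxC: "f_kappa A B \<kappa> x \<in> carrier_vec n" using f_kappa_alt[OF A B] A by simp
  have fyC: "f_kappa A B \<kappa> y \<in> carrier_vec n" using f_kappa_alt[OF A B] A by simp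
  have "f_kappa A B \<kappa> x = f_kappa A B \<kappa> y"
    using ker[unfolded xy[symmetric]] key A vec_diff_zero_iff[OF fxC fyC] by simp
  moreover have "x \<noteq> y"
  proof
    assume "x = y"
    then have "v = 0\<^sub>v n" using xy pos_vecs_carrier[OF y_pos] by auto
    then show False using v0 A by auto
  qed
  moreover have "injective_wrt n (f_kappa A B \<kappa>) (mat_image A)" using inj \<kappa>pos by blast
  ultimately show False using x_pos y_pos xy im unfolding injective_wrt_def by blast
qed


definition Tset :: "nat \<Rightarrow> nat \<Rightarrow> nat \<Rightarrow> (nat set \<times> nat set) set" where
  "Tset n r s = {IJ. fst IJ \<subseteq> {0..<n} \<and> card (fst IJ) = s \<and> snd IJ \<subseteq> {0..<r} \<and> card (snd IJ) = s}"

definition monom :: "(nat \<Rightarrow> real) \<Rightarrow> (nat \<Rightarrow> real) \<Rightarrow> nat set \<times> nat set \<Rightarrow> real" where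
  "monom k l IJ = (\<Prod>j\<in>snd IJ. k j) * (\<Prod>i\<in>fst IJ. l i)"

definition polyv :: "nat \<Rightarrow> nat \<Rightarrow> nat \<Rightarrow> (nat set \<times> nat set \<Rightarrow> real) \<Rightarrow> (nat \<Rightarrow> real) \<Rightarrow> (nat \<Rightarrow> real) \<Rightarrow> real" where
  "polyv n r s c k l = (\<Sum>IJ\<in>Tset n r s. c IJ * monom k l IJ)"

lemma finite_Tset: "finite (Tset n r s)"
proof -
  have "Tset n r s \<subseteq> Pow {0..<n} \<times> Pow {0..<r}" unfolding Tset_def by auto
  then show ?thesis by (rule finite_subset) auto
qed

lemma mono_pos: "(\<forall>j<r. k j > 0) \<Longrightarrow> (\<forall>i<n. l i > 0) \<Longrightarrow> IJ \<in> Tset n r s \<Longrightarrow> monom k l IJ > 0"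
  unfolding monom_def Tset_def by (auto intro!: prod_pos mult_pos_pos)

lemma prod_le_eps:
  fixes k :: "nat \<Rightarrow> real"
  assumes "finite J" "\<And>j. j \<in> J \<Longrightarrow> 0 \<le> k j \<and> k j \<le> 1" "j0 \<in> J" "k j0 \<le> \<epsilon>"
  shows "(\<Prod>j\<in>J. k j) \<le> \<epsilon>"
proof -
  have e0: "0 \<le> \<epsilon>" using assms(2)[OF assms(3)] assms(4) by linarith
  have "(\<Prod>j\<in>J. k j) = k j0 * (\<Prod>j\<in>J - {j0}. k j)" using assms(1,3) by (rule prod.remove)
  also have "\<dots> \<le> \<epsilon> * 1"
    by (rule mult_mono, insert assms e0, auto intro!: prod_le_1 prod_nonneg)
  finally show ?thesis by simp
qed

lemma pos_point:
  assumes p1: "p1 \<in> Tset n r s" and c1: "c p1 > 0"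
  shows "\<exists>k l. (\<forall>j<r. k j > 0) \<and> (\<forall>i<n. l i > 0) \<and> polyv n r s c k l > 0"
proof -
  obtain I1 J1 where p1e: "p1 = (I1, J1)" by fastforce
  have I1: "I1 \<subseteq> {0..<n}" "card I1 = s" and J1: "J1 \<subseteq> {0..<r}" "card J1 = s"
    using p1 unfolding p1e Tset_def by auto
  define K where "K = (\<Sum>IJ\<in>Tset n r s. \<bar>c IJ\<bar>)"
  have K0: "K \<ge> 0" unfolding K_def by (rule sum_nonneg) auto
  define \<epsilon> where "\<epsilon> = min 1 (c p1 / (2 * (K + 1)))"
  have epos: "\<epsilon> > 0" unfolding \<epsilon>_def using c1 K0 by auto
  have e1: "\<epsilon> \<le> 1" unfolding \<epsilon>_def by auto
  have eK: "K * \<epsilon> \<le> c p1 / 2"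
  proof -
    have "K * \<epsilon> \<le> K * (c p1 / (2 * (K + 1)))" using K0 unfolding \<epsilon>_def by (intro mult_left_mono) auto
    also have "\<dots> = (K / (K + 1)) * (c p1 / 2)" using K0 by (simp add: field_simps)
    also have "\<dots> \<le> 1 * (c p1 / 2)" using K0 c1 by (intro mult_right_mono) auto
    finally show ?thesis by simp
  qed
  define k where "k j = (if j \<in> J1 then 1 else \<epsilon>)" for j
  define l where "l i = (if i \<in> I1 then 1 else \<epsilon>)" for i
  have kpos: "\<forall>j<r. k j > 0" and lpos: "\<forall>i<n. l i > 0" using epos unfolding k_def l_def by auto
  have m1: "monom k l p1 = 1" unfolding p1e monom_def k_def l_def by simp
  have mo: "0 \<le> monom k l IJ \<and> monom k l IJ \<le> \<epsilon>" if IJ: "IJ \<in> Tset n r s - {p1}" for IJ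
  proof -
    obtain I J where IJe: "IJ = (I, J)" by fastforce
    have I: "I \<subseteq> {0..<n}" "card I = s" and J: "J \<subseteq> {0..<r}" "card J = s" and ne: "(I,J) \<noteq> (I1,J1)"
      using IJ unfolding IJe p1e Tset_def by auto
    have finI: "finite I" and finJ: "finite J" using I J finite_subset by auto
    have kb: "\<And>j. 0 \<le> k j \<and> k j \<le> 1" using epos e1 unfolding k_def by auto
    have lb: "\<And>i. 0 \<le> l i \<and> l i \<le> 1" using epos e1 unfolding l_def by auto
    have pk: "0 \<le> (\<Prod>j\<in>J. k j)" "(\<Prod>j\<in>J. k j) \<le> 1" using kb by (auto intro: prod_nonneg prod_le_1)
    have pl: "0 \<le> (\<Prod>i\<in>I. l i)" "(\<Prod>i\<in>I. l i) \<le> 1" using lb by (auto intro: prod_nonneg prod_le_1)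
    have "\<not> J \<subseteq> J1 \<or> \<not> I \<subseteq> I1"
    proof (rule ccontr)
      assume "\<not> ?thesis"
      then have "J \<subseteq> J1" "I \<subseteq> I1" by auto
      then have "J = J1" "I = I1" using card_subset_eq J1 I1 J I finite_subset
        by (metis finite_atLeastLessThan)+
      then show False using ne by simp
    qed
    then have "monom k l IJ \<le> \<epsilon>"
    proof
      assume "\<not> J \<subseteq> J1"
      then obtain j0 where "j0 \<in> J" "j0 \<notin> J1" by auto
      then have "(\<Prod>j\<in>J. k j) \<le> \<epsilon>" using kb by (intro prod_le_eps[OF finJ]) (auto simp: k_def)
      then have "(\<Prod>j\<in>J. k j) * (\<Prod>i\<in>I. l i) \<le> \<epsilon> * 1" using pk pl epos by (intro mult_mono) auto
      then show ?thesis unfolding IJe monom_def by simp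
    next
      assume "\<not> I \<subseteq> I1"
      then obtain i0 where "i0 \<in> I" "i0 \<notin> I1" by auto
      then have "(\<Prod>i\<in>I. l i) \<le> \<epsilon>" using lb by (intro prod_le_eps[OF finI]) (auto simp: l_def)
      then have "(\<Prod>j\<in>J. k j) * (\<Prod>i\<in>I. l i) \<le> 1 * \<epsilon>" using pk pl epos by (intro mult_mono) auto
      then show ?thesis unfolding IJe monom_def by simp
    qed
    moreover have "0 \<le> monom k l IJ" unfolding IJe monom_def using pk pl by simp
    ultimately show ?thesis by simp
  qed
  have "polyv n r s c k l = c p1 * monom k l p1 + (\<Sum>IJ\<in>Tset n r s - {p1}. c IJ * monom k l IJ)"
    unfolding polyv_def using finite_Tset p1 by (rule sum.remove)
  also have "\<dots> \<ge> c p1 - K * \<epsilon>"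
  proof -
    have "(\<Sum>IJ\<in>Tset n r s - {p1}. c IJ * monom k l IJ) \<ge> - (\<Sum>IJ\<in>Tset n r s - {p1}. \<bar>c IJ\<bar> * \<epsilon>)"
      unfolding sum_negf[symmetric]
    proof (rule sum_mono)
      fix IJ assume "IJ \<in> Tset n r s - {p1}"
      then have "\<bar>c IJ * monom k l IJ\<bar> \<le> \<bar>c IJ\<bar> * \<epsilon>"
        using mo[of IJ] by (auto simp: abs_mult intro!: mult_left_mono)
      then show "- (\<bar>c IJ\<bar> * \<epsilon>) \<le> c IJ * monom k l IJ" by linarith
    qed
    moreover have "(\<Sum>IJ\<in>Tset n r s - {p1}. \<bar>c IJ\<bar> * \<epsilon>) \<le> K * \<epsilon>"
      unfolding K_def sum_distrib_right[symmetric] using epos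
      by (intro mult_right_mono sum_mono2 finite_Tset) auto
    ultimately show ?thesis using m1 by simp
  qed
  finally have "polyv n r s c k l > 0" using eK c1 by linarith
  then show ?thesis using kpos lpos by blast
qed

lemma zero_point:
  assumes k1: "\<forall>j<r. k1 j > 0" and l1: "\<forall>i<n. l1 i > 0" and g1: "polyv n r s c k1 l1 > 0"
    and k2: "\<forall>j<r. k2 j > 0" and l2: "\<forall>i<n. l2 i > 0" and g2: "polyv n r s c k2 l2 < 0"
  shows "\<exists>k l. (\<forall>j<r. k j > 0) \<and> (\<forall>i<n. l i > 0) \<and> polyv n r s c k l = 0"
proof -
  define kt where "kt t j = (1 - t) * k1 j + t * k2 j" for t :: real and j
  define lt where "lt t i = (1 - t) * l1 i + t * l2 i" for t :: real and i
  define g where "g t = polyv n r s c (kt t) (lt t)" for t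
  have cont: "continuous_on {0..1} g"
    unfolding g_def polyv_def monom_def kt_def lt_def
    by (intro continuous_intros)
  obtain t where t: "0 \<le> t" "t \<le> 1" "g t = 0"
    using IVT2'[of g 1 0 0, OF _ _ _ cont] g1 g2 unfolding g_def kt_def lt_def by auto
  have cpos: "(1 - t) * a + t * b > 0" if "a > 0" "b > 0" for a b :: real
  proof (cases "t = 0")
    case True then show ?thesis using that by simp
  next
    case False
    then have "t * b > 0" using t that by simp
    moreover have "(1 - t) * a \<ge> 0" using t that by simp
    ultimately show ?thesis by linarith
  qed
  have "\<forall>j<r. kt t j > 0" using k1 k2 cpos unfolding kt_def by auto
  moreover have "\<forall>i<n. lt t i > 0" using l1 l2 cpos unfolding lt_def by auto
  ultimately show ?thesis using t(3) unfolding g_def by blast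
qed

lemma polyv_neg: "polyv n r s (\<lambda>p. - c p) k l = - polyv n r s c k l"
  unfolding polyv_def by (simp add: sum_negf)

lemma sign_cond_iff:
  fixes c :: "nat set \<times> nat set \<Rightarrow> real"
  shows "((\<forall>p\<in>Tset n r s. \<forall>q\<in>Tset n r s. c p \<noteq> 0 \<and> c q \<noteq> 0 \<longrightarrow> sgn (c p) = sgn (c q)) \<and> (\<exists>p\<in>Tset n r s. c p \<noteq> 0))
   \<longleftrightarrow> (\<forall>k l. (\<forall>j<r. k j > 0) \<longrightarrow> (\<forall>i<n. l i > 0) \<longrightarrow> polyv n r s c k l \<noteq> 0)"
proof
  assume H: "(\<forall>p\<in>Tset n r s. \<forall>q\<in>Tset n r s. c p \<noteq> 0 \<and> c q \<noteq> 0 \<longrightarrow> sgn (c p) = sgn (c q)) \<and> (\<exists>p\<in>Tset n r s. c p \<noteq> 0)"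
  then obtain p0 where p0: "p0 \<in> Tset n r s" "c p0 \<noteq> 0" by auto
  define \<sigma> where "\<sigma> = sgn (c p0)"
  have nn: "\<sigma> * c p \<ge> 0" if "p \<in> Tset n r s" for p
  proof (cases "c p = 0")
    case False
    then have "\<sigma> = sgn (c p)" using H p0 that unfolding \<sigma>_def by metis
    then show ?thesis by (cases "c p > 0") (auto simp: mult_nonpos_nonpos)
  qed simp
  show "\<forall>k l. (\<forall>j<r. k j > 0) \<longrightarrow> (\<forall>i<n. l i > 0) \<longrightarrow> polyv n r s c k l \<noteq> 0"
  proof (intro allI impI)
    fix k l :: "nat \<Rightarrow> real" assume k: "\<forall>j<r. k j > 0" and l: "\<forall>i<n. l i > 0"
    have "\<sigma> * c p0 * monom k l p0 \<le> (\<Sum>p\<in>Tset n r s. \<sigma> * c p * monom k l p)"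
    proof (rule member_le_sum[OF p0(1) _ finite_Tset])
      fix p assume "p \<in> Tset n r s - {p0}"
      then have pT: "p \<in> Tset n r s" by auto
      then have "0 \<le> \<sigma> * c p" "0 < monom k l p" using nn mono_pos[OF k l pT] by auto
      then show "0 \<le> \<sigma> * c p * monom k l p" by simp
    qed
    also have "\<dots> = \<sigma> * polyv n r s c k l" unfolding polyv_def sum_distrib_left by (simp add: ac_simps)
    finally have le: "\<sigma> * c p0 * monom k l p0 \<le> \<sigma> * polyv n r s c k l" .
    have "\<sigma> * c p0 > 0" using p0(2) unfolding \<sigma>_def by (cases "c p0 > 0") auto
    then have "\<sigma> * c p0 * monom k l p0 > 0" using mono_pos[OF k l p0(1)] by simp
    then show "polyv n r s c k l \<noteq> 0" using le by auto
  qed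
next
  assume H: "\<forall>k l. (\<forall>j<r. k j > 0) \<longrightarrow> (\<forall>i<n. l i > 0) \<longrightarrow> polyv n r s c k l \<noteq> 0"
  show "(\<forall>p\<in>Tset n r s. \<forall>q\<in>Tset n r s. c p \<noteq> 0 \<and> c q \<noteq> 0 \<longrightarrow> sgn (c p) = sgn (c q)) \<and> (\<exists>p\<in>Tset n r s. c p \<noteq> 0)"
  proof (intro conjI ballI impI)
    fix p q assume p: "p \<in> Tset n r s" and q: "q \<in> Tset n r s" and pq: "c p \<noteq> 0 \<and> c q \<noteq> 0"
    show "sgn (c p) = sgn (c q)"
    proof (rule ccontr)
      assume ne: "sgn (c p) \<noteq> sgn (c q)"
      obtain pp pn where pp: "pp \<in> Tset n r s" "c pp > 0" and pn: "pn \<in> Tset n r s" "c pn < 0"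
      proof (cases "c p > 0")
        case True
        then have "c q < 0" using ne pq by (metis linorder_neqE_linordered_idom sgn_pos)
        then show ?thesis using that p q True by blast
      next
        case False
        then have "c p < 0" using pq by auto
        moreover have "c q > 0" using ne pq \<open>c p < 0\<close> by (metis linorder_neqE_linordered_idom sgn_neg)
        ultimately show ?thesis using that p q by blast
      qed
      obtain k1 l1 where 1: "\<forall>j<r. k1 j > 0" "\<forall>i<n. l1 i > 0" "polyv n r s c k1 l1 > 0"
        using pos_point[of pp n r s c] pp by blast
      obtain k2 l2 where 2: "\<forall>j<r. k2 j > 0" "\<forall>i<n. l2 i > 0" "polyv n r s (\<lambda>p. - c p) k2 l2 > 0"
        using pos_point[of pn n r s "\<lambda>p. - c p"] pn by auto
      have "polyv n r s c k2 l2 < 0" using 2(3) unfolding polyv_neg by simp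
      then obtain k l where "\<forall>j<r. k j > 0" "\<forall>i<n. l i > 0" "polyv n r s c k l = 0"
        using zero_point[OF 1 2(1,2)] by blast
      then show False using H by blast
    qed
  next
    show "\<exists>p\<in>Tset n r s. c p \<noteq> 0"
    proof (rule ccontr)
      assume "\<not> ?thesis"
      then have "polyv n r s c (\<lambda>_. 1) (\<lambda>_. 1) = 0" unfolding polyv_def by auto
      then show False using H by auto
    qed
  qed
qed


lemma submatrix_mult:
  assumes X: "X \<in> carrier_mat a m" and Y: "Y \<in> carrier_mat m b"
  shows "submatrix (X * Y) I J = submatrix X I UNIV * submatrix Y UNIV J"
proof (rule eq_matI)
  have dX: "dim_col (submatrix X I UNIV) = m" using X by (simp add: dim_submatrix)
  have dY: "dim_row (submatrix Y UNIV J) = m" using Y by (simp add: dim_submatrix)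
  fix i j assume i: "i < dim_row (submatrix X I UNIV * submatrix Y UNIV J)"
    and j: "j < dim_col (submatrix X I UNIV * submatrix Y UNIV J)"
  have i': "i < card {i. i < a \<and> i \<in> I}" using i X by (simp add: dim_submatrix)
  have j': "j < card {j. j < b \<and> j \<in> J}" using j Y by (simp add: dim_submatrix)
  have pi: "pick I i < a" using pick_le[OF i'] .
  have pj: "pick J j < b" using pick_le[OF j'] .
  have "submatrix (X * Y) I J $$ (i,j) = (X * Y) $$ (pick I i, pick J j)"
    using i' j' X Y by (simp add: submatrix_index)
  also have "\<dots> = (\<Sum>k<m. X $$ (pick I i, k) * Y $$ (k, pick J j))"
    using pi pj X Y by (auto simp: scalar_prod_def lessThan_atLeast0 intro!: sum.cong)
  also have "\<dots> = (submatrix X I UNIV * submatrix Y UNIV J) $$ (i,j)"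
    using i' j' X Y dX dY
    by (auto simp: scalar_prod_def lessThan_atLeast0 submatrix_index pick_UNIV dim_submatrix intro!: sum.cong)
  finally show "submatrix (X * Y) I J $$ (i,j) = (submatrix X I UNIV * submatrix Y UNIV J) $$ (i,j)" .
qed (insert X Y, auto simp: dim_submatrix)

lemma submatrix_UNIV_UNIV: "submatrix X UNIV UNIV = X"
  by (rule eq_matI, auto simp: dim_submatrix submatrix_index pick_UNIV)

lemma submatrix_rows_cols:
  "submatrix (submatrix X J UNIV) UNIV I = submatrix X J I"
proof (rule eq_matI)
  fix a b assume a: "a < dim_row (submatrix X J I)" and b: "b < dim_col (submatrix X J I)"
  have a': "a < card {i. i < dim_row X \<and> i \<in> J}" and b': "b < card {j. j < dim_col X \<and> j \<in> I}"
    using a b by (auto simp: dim_submatrix)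
  have pb: "pick I b < dim_col X" using pick_le[OF b'] .
  show "submatrix (submatrix X J UNIV) UNIV I $$ (a,b) = submatrix X J I $$ (a,b)"
    using a' b' pb by (simp add: submatrix_index dim_submatrix pick_UNIV)
qed (auto simp: dim_submatrix)

lemma submatrix_carrier_gen:
  assumes X: "X \<in> carrier_mat a b" and J: "J \<subseteq> {0..<a}" "card J = t" and I: "I \<subseteq> {0..<b}" "card I = t"
  shows "submatrix X J I \<in> carrier_mat t t"
proof -
  have "{j. j < a \<and> j \<in> J} = J" "{j. j < b \<and> j \<in> I} = I" using J I by auto
  then show ?thesis using X J I unfolding carrier_mat_def by (simp add: dim_submatrix)
qed

lemma prod_pick:
  assumes "finite J" "card J = t"
  shows "(\<Prod>a\<in>{0..<t}. g (pick J a)) = (\<Prod>j\<in>J. g j)"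
  using prod.reindex_bij_betw[OF pick_bij[OF assms(1)], of g] assms(2) by simp

lemma det_scaled_sub:
  assumes B: "B \<in> carrier_mat r n" and J: "J \<subseteq> {0..<r}" "card J = t" and I: "I \<subseteq> {0..<n}" "card I = t"
  shows "det (submatrix (Cm B k l) J I) = (\<Prod>j\<in>J. k j) * (\<Prod>i\<in>I. l i) * det (submatrix B J I)"
proof -
  have C: "Cm B k l \<in> carrier_mat r n" using B unfolding Cm_def by auto
  have CJI: "submatrix (Cm B k l) J I \<in> carrier_mat t t" by (rule submatrix_carrier_gen[OF C J I])
  have BJI: "submatrix B J I \<in> carrier_mat t t" by (rule submatrix_carrier_gen[OF B J I])
  have cJ: "{j. j < r \<and> j \<in> J} = J" and cI: "{j. j < n \<and> j \<in> I} = I" using J I by auto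
  have finJ: "finite J" and finI: "finite I" using J I finite_subset by auto
  have ent: "submatrix (Cm B k l) J I $$ (a,b) = k (pick J a) * submatrix B J I $$ (a,b) * l (pick I b)"
    if "a < t" "b < t" for a b
  proof -
    have "pick J a < r" "pick I b < n" using pick_le[of a r J] pick_le[of b n I] that cJ cI J I by auto
    then show ?thesis using that B C cJ cI J I by (simp add: submatrix_index Cm_def)
  qed
  have "det (submatrix (Cm B k l) J I) = (\<Sum>p\<in>{p. p permutes {0..<t}}. signof p * (\<Prod>a = 0..<t. submatrix (Cm B k l) J I $$ (a, p a)))"
    by (rule det_def'[OF CJI])
  also have "\<dots> = (\<Sum>p\<in>{p. p permutes {0..<t}}. ((\<Prod>j\<in>J. k j) * (\<Prod>i\<in>I. l i)) * (signof p * (\<Prod>a = 0..<t. submatrix B J I $$ (a, p a))))"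
  proof (rule sum.cong[OF refl])
    fix p assume "p \<in> {p. p permutes {0..<t}}"
    then have p: "p permutes {0..<t}" by simp
    have pU: "\<And>a. a < t \<Longrightarrow> p a < t" using p permutes_in_image by fastforce
    have "(\<Prod>a = 0..<t. submatrix (Cm B k l) J I $$ (a, p a)) = (\<Prod>a = 0..<t. k (pick J a) * submatrix B J I $$ (a, p a) * l (pick I (p a)))"
      using ent pU by (auto intro!: prod.cong)
    also have "\<dots> = (\<Prod>a = 0..<t. k (pick J a)) * (\<Prod>a = 0..<t. submatrix B J I $$ (a, p a)) * (\<Prod>a = 0..<t. l (pick I (p a)))"
      by (simp add: prod.distrib)
    also have "(\<Prod>a = 0..<t. l (pick I (p a))) = (\<Prod>a = 0..<t. l (pick I a))"
      using prod.permute[OF p, of "\<lambda>a. l (pick I a)"] by (simp add: o_def)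
    also have "(\<Prod>a = 0..<t. l (pick I a)) = (\<Prod>i\<in>I. l i)" by (rule prod_pick[OF finI I(2)])
    also have "(\<Prod>a = 0..<t. k (pick J a)) = (\<Prod>j\<in>J. k j)" by (rule prod_pick[OF finJ J(2)])
    finally show "signof p * (\<Prod>a = 0..<t. submatrix (Cm B k l) J I $$ (a, p a)) = ((\<Prod>j\<in>J. k j) * (\<Prod>i\<in>I. l i)) * (signof p * (\<Prod>a = 0..<t. submatrix B J I $$ (a, p a)))"
      by (simp add: ac_simps)
  qed
  also have "\<dots> = (\<Prod>j\<in>J. k j) * (\<Prod>i\<in>I. l i) * det (submatrix B J I)"
    unfolding det_def'[OF BJI] sum_distrib_left by simp
  finally show ?thesis .
qed

lemma Tset_prod: "Tset n r s = {I. I \<subseteq> {0..<n} \<and> card I = s} \<times> {J. J \<subseteq> {0..<r} \<and> card J = s}"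
  unfolding Tset_def by auto

definition cminor :: "real mat \<Rightarrow> real mat \<Rightarrow> nat set \<times> nat set \<Rightarrow> real" where
  "cminor A B IJ = det (submatrix A (fst IJ) (snd IJ)) * det (submatrix B (snd IJ) (fst IJ))"

lemma det_expand:
  assumes A: "A \<in> carrier_mat n r" and B: "B \<in> carrier_mat r n" and P: "P \<in> carrier_mat n s"
    and Q: "Q \<in> carrier_mat s r" and APQ: "A = P * Q"
  shows "det (Q * Cm B k l * P) = polyv n r s (cminor A B) k l"
proof -
  let ?SJ = "{J. J \<subseteq> {0..<r} \<and> card J = s}"
  let ?SI = "{I. I \<subseteq> {0..<n} \<and> card I = s}"
  have C: "Cm B k l \<in> carrier_mat r n" using B unfolding Cm_def by auto
  have CP: "Cm B k l * P \<in> carrier_mat r s" using C P by auto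
  have "det (Q * Cm B k l * P) = det (Q * (Cm B k l * P))" using Q C P by (simp add: assoc_mult_mat)
  also have "\<dots> = (\<Sum>J\<in>?SJ. det (submatrix Q UNIV J) * det (submatrix (Cm B k l * P) J UNIV))"
    by (rule cauchy_binet[OF Q CP])
  also have "\<dots> = (\<Sum>J\<in>?SJ. \<Sum>I\<in>?SI. det (submatrix Q UNIV J) * ((\<Prod>j\<in>J. k j) * (\<Prod>i\<in>I. l i) * det (submatrix B J I) * det (submatrix P I UNIV)))"
  proof (rule sum.cong[OF refl])
    fix J assume "J \<in> ?SJ"
    then have J: "J \<subseteq> {0..<r}" "card J = s" by auto
    have CJ: "submatrix (Cm B k l) J UNIV \<in> carrier_mat s n"
    proof -
      have "{j. j < r \<and> j \<in> J} = J" using J by auto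
      then show ?thesis using C J unfolding carrier_mat_def by (simp add: dim_submatrix)
    qed
    have "submatrix (Cm B k l * P) J UNIV = submatrix (Cm B k l) J UNIV * P"
      using submatrix_mult[OF C P, of J UNIV] by (simp add: submatrix_UNIV_UNIV)
    then have "det (submatrix (Cm B k l * P) J UNIV) = (\<Sum>I\<in>?SI. det (submatrix (submatrix (Cm B k l) J UNIV) UNIV I) * det (submatrix P I UNIV))"
      using cauchy_binet[OF CJ P] by simp
    also have "\<dots> = (\<Sum>I\<in>?SI. (\<Prod>j\<in>J. k j) * (\<Prod>i\<in>I. l i) * det (submatrix B J I) * det (submatrix P I UNIV))"
      by (rule sum.cong[OF refl], simp add: submatrix_rows_cols det_scaled_sub[OF B J])
    finally show "det (submatrix Q UNIV J) * det (submatrix (Cm B k l * P) J UNIV) = (\<Sum>I\<in>?SI. det (submatrix Q UNIV J) * ((\<Prod>j\<in>J. k j) * (\<Prod>i\<in>I. l i) * det (submatrix B J I) * det (submatrix P I UNIV)))"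
      by (simp add: sum_distrib_left)
  qed
  also have "\<dots> = (\<Sum>I\<in>?SI. \<Sum>J\<in>?SJ. det (submatrix Q UNIV J) * ((\<Prod>j\<in>J. k j) * (\<Prod>i\<in>I. l i) * det (submatrix B J I) * det (submatrix P I UNIV)))"
    by (rule sum.swap)
  also have "\<dots> = (\<Sum>(I,J)\<in>?SI \<times> ?SJ. det (submatrix Q UNIV J) * ((\<Prod>j\<in>J. k j) * (\<Prod>i\<in>I. l i) * det (submatrix B J I) * det (submatrix P I UNIV)))"
    by (rule sum.cartesian_product)
  also have "\<dots> = polyv n r s (cminor A B) k l"
  proof -
    have eqIJ: "det (submatrix Q UNIV J) * ((\<Prod>j\<in>J. k j) * (\<Prod>i\<in>I. l i) * det (submatrix B J I) * det (submatrix P I UNIV))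
        = cminor A B (I, J) * monom k l (I, J)" if I: "I \<subseteq> {0..<n}" "card I = s" and J: "J \<subseteq> {0..<r}" "card J = s" for I J
    proof -
      have PI: "submatrix P I UNIV \<in> carrier_mat s s" by (rule submatrix_J_UNIV_carrier[OF P I])
      have QJ: "submatrix Q UNIV J \<in> carrier_mat s s" by (rule submatrix_UNIV_J_carrier[OF Q J])
      have "det (submatrix A I J) = det (submatrix P I UNIV) * det (submatrix Q UNIV J)"
        unfolding APQ submatrix_mult[OF P Q] by (rule det_mult[OF PI QJ])
      then show ?thesis unfolding cminor_def monom_def by simp
    qed
    show ?thesis unfolding polyv_def Tset_prod
      by (rule sum.cong[OF refl]) (auto simp: eqIJ)
  qed
  finally show ?thesis .
qed


lemma mat_vec_zero: "P \<in> carrier_mat n s \<Longrightarrow> P *\<^sub>v 0\<^sub>v s = (0\<^sub>v n :: real vec)"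
  by (intro eq_vecI) (auto simp: scalar_prod_def)

lemma K1:
  assumes A: "A \<in> carrier_mat n r" and B: "B \<in> carrier_mat r n" and P: "P \<in> carrier_mat n s"
    and Q: "Q \<in> carrier_mat s r" and APQ: "A = P * Q"
    and inj: "\<forall>w \<in> carrier_vec s. P *\<^sub>v w = 0\<^sub>v n \<longrightarrow> w = 0\<^sub>v s"
    and E: "E \<in> carrier_mat r s" and PAE: "P = A * E"
  shows "noker A B k l \<longleftrightarrow> det (Q * Cm B k l * P) \<noteq> 0"
proof -
  have C: "Cm B k l \<in> carrier_mat r n" using B unfolding Cm_def by auto
  have D: "Q * Cm B k l * P \<in> carrier_mat s s" using Q C P by auto
  have Dv: "(Q * Cm B k l * P) *\<^sub>v w = Q *\<^sub>v (Cm B k l *\<^sub>v (P *\<^sub>v w))" if "w \<in> carrier_vec s" for w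
  proof -
    have "(Q * Cm B k l * P) *\<^sub>v w = (Q * Cm B k l) *\<^sub>v (P *\<^sub>v w)"
      using Q C P that by (intro assoc_mult_mat_vec) auto
    also have "\<dots> = Q *\<^sub>v (Cm B k l *\<^sub>v (P *\<^sub>v w))"
      using Q C P that by (intro assoc_mult_mat_vec) auto
    finally show ?thesis .
  qed
  have Av: "A *\<^sub>v x = P *\<^sub>v (Q *\<^sub>v x)" if "x \<in> carrier_vec r" for x
    unfolding APQ using P Q that by simp
  have nrA: "dim_row A = n" using A by simp
  show ?thesis
  proof
    assume nk: "noker A B k l"
    show "det (Q * Cm B k l * P) \<noteq> 0"
    proof
      assume "det (Q * Cm B k l * P) = 0"
      then obtain w where w: "w \<in> carrier_vec s" "w \<noteq> 0\<^sub>v s" "(Q * Cm B k l * P) *\<^sub>v w = 0\<^sub>v s"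
        using det_0_iff_vec_prod_zero_field[OF D] by auto
      define v where "v = P *\<^sub>v w"
      have vC: "v \<in> carrier_vec n" unfolding v_def using P w by auto
      have "v = A *\<^sub>v (E *\<^sub>v w)" unfolding v_def PAE using A E w by simp
      then have vim: "v \<in> mat_image A" unfolding mat_image_def using E w A by auto
      have v0: "v \<noteq> 0\<^sub>v n" using inj w unfolding v_def by auto
      have CvC: "Cm B k l *\<^sub>v v \<in> carrier_vec r" using C vC by auto
      have "A *\<^sub>v (Cm B k l *\<^sub>v v) = P *\<^sub>v (Q *\<^sub>v (Cm B k l *\<^sub>v v))" by (rule Av[OF CvC])
      also have "\<dots> = P *\<^sub>v ((Q * Cm B k l * P) *\<^sub>v w)" using Dv[OF w(1)] unfolding v_def by simp
      also have "\<dots> = 0\<^sub>v n" using w(3) P by (simp add: mat_vec_zero)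
      finally show False using nk vim v0 unfolding noker_def nrA by blast
    qed
  next
    assume dn: "det (Q * Cm B k l * P) \<noteq> 0"
    show "noker A B k l" unfolding noker_def nrA
    proof (rule notI, elim exE conjE)
      fix v assume vim: "v \<in> mat_image A" and v0: "v \<noteq> 0\<^sub>v n" and ker: "A *\<^sub>v (Cm B k l *\<^sub>v v) = 0\<^sub>v n"
      obtain u where u: "u \<in> carrier_vec r" "v = A *\<^sub>v u" using vim A unfolding mat_image_def by auto
      define w where "w = Q *\<^sub>v u"
      have wC: "w \<in> carrier_vec s" unfolding w_def using Q u by auto
      have vw: "v = P *\<^sub>v w" unfolding w_def u(2) using Av[OF u(1)] .
      have w0: "w \<noteq> 0\<^sub>v s" using v0 vw P by auto
      have vC: "v \<in> carrier_vec n" using vw P wC by auto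
      have CvC: "Cm B k l *\<^sub>v v \<in> carrier_vec r" using C vC by auto
      have "A *\<^sub>v (Cm B k l *\<^sub>v v) = P *\<^sub>v (Q *\<^sub>v (Cm B k l *\<^sub>v v))" by (rule Av[OF CvC])
      also have "\<dots> = P *\<^sub>v ((Q * Cm B k l * P) *\<^sub>v w)" using Dv[OF wC] unfolding vw by simp
      finally have "P *\<^sub>v ((Q * Cm B k l * P) *\<^sub>v w) = A *\<^sub>v (Cm B k l *\<^sub>v v)" by simp
      then have "P *\<^sub>v ((Q * Cm B k l * P) *\<^sub>v w) = 0\<^sub>v n" using ker by simp
      then have "(Q * Cm B k l * P) *\<^sub>v w = 0\<^sub>v s" using inj D wC by auto
      then have "det (Q * Cm B k l * P) = 0"
        using det_0_iff_vec_prod_zero_field[OF D] wC w0 by auto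
      then show False using dn by simp
    qed
  qed
qed

theorem mainTheorem14:
  fixes A B :: "real mat" and n r :: nat
  assumes A: "A \<in> carrier_mat n r" and B: "B \<in> carrier_mat r n"
  defines "s \<equiv> vec_space.rank n A"
  shows "(\<forall>\<kappa> \<in> pos_vecs r. injective_wrt n (f_kappa A B \<kappa>) (mat_image A))
     \<longleftrightarrow>
     ((\<forall>I J I' J'. I \<subseteq> {0..<n} \<and> J \<subseteq> {0..<r} \<and> card I = s \<and> card J = s \<and>
                   I' \<subseteq> {0..<n} \<and> J' \<subseteq> {0..<r} \<and> card I' = s \<and> card J' = s \<and>
                   det (submatrix A I J) * det (submatrix B J I) \<noteq> 0 \<and>
                   det (submatrix A I' J') * det (submatrix B J' I') \<noteq> 0 \<longrightarrow>
                   sgn (det (submatrix A I J) * det (submatrix B J I)) =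
                   sgn (det (submatrix A I' J') * det (submatrix B J' I'))) \<and>
      (\<exists>I J. I \<subseteq> {0..<n} \<and> J \<subseteq> {0..<r} \<and> card I = s \<and> card J = s \<and>
             det (submatrix A I J) * det (submatrix B J I) \<noteq> 0))"
  (is "?INJ \<longleftrightarrow> (?Y1 \<and> ?Y2)")
proof -
  obtain P Q E where P: "P \<in> carrier_mat n s" and Q: "Q \<in> carrier_mat s r" and APQ: "A = P * Q"
    and inj: "\<forall>w \<in> carrier_vec s. P *\<^sub>v w = 0\<^sub>v n \<longrightarrow> w = 0\<^sub>v s"
    and E: "E \<in> carrier_mat r s" and PAE: "P = A * E"
    using vec_space.rank_decomp[OF A] unfolding s_def by blast
  let ?X1 = "\<forall>p\<in>Tset n r s. \<forall>q\<in>Tset n r s. cminor A B p \<noteq> 0 \<and> cminor A B q \<noteq> 0 \<longrightarrow> sgn (cminor A B p) = sgn (cminor A B q)"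
  let ?X2 = "\<exists>p\<in>Tset n r s. cminor A B p \<noteq> 0"
  have "?INJ \<longleftrightarrow> (\<forall>k l. (\<forall>j<r. k j > 0) \<longrightarrow> (\<forall>i<n. l i > 0) \<longrightarrow> noker A B k l)"
    using inj_imp_noker[OF A B] noker_imp_inj[OF A B] by blast
  also have "\<dots> \<longleftrightarrow> (\<forall>k l. (\<forall>j<r. k j > 0) \<longrightarrow> (\<forall>i<n. l i > 0) \<longrightarrow> polyv n r s (cminor A B) k l \<noteq> 0)"
    using K1[OF A B P Q APQ inj E PAE] det_expand[OF A B P Q APQ] by simp
  also have "\<dots> \<longleftrightarrow> (?X1 \<and> ?X2)"
    by (rule sign_cond_iff[symmetric])
  also have "\<dots> \<longleftrightarrow> (?Y1 \<and> ?Y2)"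
  proof -
    have T: "\<And>I J. (I,J) \<in> Tset n r s \<longleftrightarrow> I \<subseteq> {0..<n} \<and> J \<subseteq> {0..<r} \<and> card I = s \<and> card J = s"
      by (auto simp add: Tset_def)
    have c: "\<And>I J. cminor A B (I,J) = det (submatrix A I J) * det (submatrix B J I)"
      by (simp add: cminor_def)
    have 1: "?X1 \<longleftrightarrow> ?Y1"
    proof
      assume H: ?X1
      show ?Y1
      proof (intro allI impI)
        fix I J I' J' assume h: "I \<subseteq> {0..<n} \<and> J \<subseteq> {0..<r} \<and> card I = s \<and> card J = s \<and>
                   I' \<subseteq> {0..<n} \<and> J' \<subseteq> {0..<r} \<and> card I' = s \<and> card J' = s \<and>
                   det (submatrix A I J) * det (submatrix B J I) \<noteq> 0 \<and>
                   det (submatrix A I' J') * det (submatrix B J' I') \<noteq> 0"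
        then have m: "(I,J) \<in> Tset n r s" "(I',J') \<in> Tset n r s" unfolding T by auto
        have nz: "cminor A B (I,J) \<noteq> 0 \<and> cminor A B (I',J') \<noteq> 0" using h unfolding c by auto
        have "sgn (cminor A B (I,J)) = sgn (cminor A B (I',J'))"
          using H m nz by blast
        then show "sgn (det (submatrix A I J) * det (submatrix B J I)) =
                   sgn (det (submatrix A I' J') * det (submatrix B J' I'))" unfolding c .
      qed
    next
      assume H: ?Y1
      show ?X1
      proof (intro ballI impI)
        fix p q assume p: "p \<in> Tset n r s" and q: "q \<in> Tset n r s" and nz: "cminor A B p \<noteq> 0 \<and> cminor A B q \<noteq> 0"
        obtain I J where pe: "p = (I,J)" by fastforce
        obtain I' J' where qe: "q = (I',J')" by fastforce
        have h1: "I \<subseteq> {0..<n} \<and> J \<subseteq> {0..<r} \<and> card I = s \<and> card J = s" using p unfolding pe T .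
        have h2: "I' \<subseteq> {0..<n} \<and> J' \<subseteq> {0..<r} \<and> card I' = s \<and> card J' = s" using q unfolding qe T .
        have h3: "det (submatrix A I J) * det (submatrix B J I) \<noteq> 0 \<and> det (submatrix A I' J') * det (submatrix B J' I') \<noteq> 0"
          using nz unfolding pe qe c .
        have "sgn (det (submatrix A I J) * det (submatrix B J I)) = sgn (det (submatrix A I' J') * det (submatrix B J' I'))"
          using H h1 h2 h3 by blast
        then show "sgn (cminor A B p) = sgn (cminor A B q)" unfolding pe qe c .
      qed
    qed
    have 2: "?X2 \<longleftrightarrow> ?Y2"
    proof
      assume ?X2
      then obtain p where p: "p \<in> Tset n r s" "cminor A B p \<noteq> 0" by blast
      obtain I J where pe: "p = (I,J)" by fastforce
      show ?Y2 using p unfolding pe T c by blast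
    next
      assume ?Y2
      then obtain I J where "I \<subseteq> {0..<n} \<and> J \<subseteq> {0..<r} \<and> card I = s \<and> card J = s"
        "det (submatrix A I J) * det (submatrix B J I) \<noteq> 0" by blast
      then have "(I,J) \<in> Tset n r s" "cminor A B (I,J) \<noteq> 0" unfolding T c by auto
      then show ?X2 by blast
    qed
    show ?thesis using 1 2 by blast
  qed
  finally show ?thesis .
qed


end
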